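(* Let $T$ be a subcubic tree with $\gamma_e^*(T)=\gamma_{e,f}^*(T)>1$. For $i\in\{1,2,3\}$ let $V_i$ be the set of vertices of degree $i$ in $T$, and let $D$ be a minimum porous exponential dominating set of $T$. Then: (i) $w^*_{(T,D)}(u)=1$ for every vertex $u\in V_1\cup V_2$; (ii) $D\subseteq V_3$ and $N_T(V_1\cup V_2)\subseteq V_3\setminus D$, where $N_T(X)$ denotes the set of vertices adjacent to some vertex of $X$; (iii) $T$ contains no vertex $u\in V_1$ and vertex $w\in V_2$ with $\mathrm{dist}_T(u,w)=2$; (iv) $T$ contains no two vertices $u_1,u_2\in V_1$ and vertex $v\in V_2$ such that $\mathrm{dist}_T(u_1,u_2)=2$ and $\mathrm{dist}_T(u_1,v)\in\{3,4\}$.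
   Context: All graphs are finite, simple and undirected; subcubic means maximum degree at most $3$. For a graph $G$ and $D\subseteq V(G)$, let $w^*_{(G,D)}(u)=\sum_{v\in D}\left(\frac12\right)^{\mathrm{dist}_G(u,v)-1}$ for $u\in V(G)$, where $\mathrm{dist}_G$ is the usual distance and $\left(\frac12\right)^\infty=0$. $D$ is a porous exponential dominating set if $w^*_{(G,D)}(u)\ge 1$ for every $u\in V(G)$; $\gamma_e^*(G)$ is the minimum size of such a set, and a porous exponential dominating set of that size is called minimum. The fractional porous exponential domination number $\gamma_{e,f}^*(G)$ is the optimum value of the linear program: minimize $\sum_{u\in V(G)}x(u)$ subject to $\sum_{u\in V(G)}\left(\frac12\right)^{\mathrm{dist}_G(u,v)-1}x(u)\ge 1$ for every $v\in V(G)$ and $x\ge 0$. *)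

theory Defs
  imports "HOL-Analysis.Analysis" "HOL-Library.Extended_Nat"
begin

definition graph :: "'a set \<Rightarrow> ('a \<Rightarrow> 'a \<Rightarrow> bool) \<Rightarrow> bool" where
  "graph V E \<longleftrightarrow> finite V \<and> (\<forall>u v. E u v \<longrightarrow> u \<in> V \<and> v \<in> V)
     \<and> (\<forall>u v. E u v \<longrightarrow> E v u) \<and> (\<forall>u. \<not> E u u)"

definition edge_rel :: "('a \<Rightarrow> 'a \<Rightarrow> bool) \<Rightarrow> ('a \<times> 'a) set" where
  "edge_rel E = {(u, v). E u v}"

definition gdist :: "('a \<Rightarrow> 'a \<Rightarrow> bool) \<Rightarrow> 'a \<Rightarrow> 'a \<Rightarrow> enat" where
  "gdist E u v = (if \<exists>n. (u, v) \<in> edge_rel E ^^ n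
                  then enat (LEAST n. (u, v) \<in> edge_rel E ^^ n) else \<infinity>)"

definition connected_graph :: "'a set \<Rightarrow> ('a \<Rightarrow> 'a \<Rightarrow> bool) \<Rightarrow> bool" where
  "connected_graph V E \<longleftrightarrow> (\<forall>u\<in>V. \<forall>v\<in>V. gdist E u v \<noteq> \<infinity>)"

definition is_cycle :: "('a \<Rightarrow> 'a \<Rightarrow> bool) \<Rightarrow> 'a list \<Rightarrow> bool" where
  "is_cycle E cs \<longleftrightarrow> length cs \<ge> 3 \<and> distinct cs
     \<and> (\<forall>i < length cs - 1. E (cs ! i) (cs ! Suc i)) \<and> E (last cs) (hd cs)"

definition tree :: "'a set \<Rightarrow> ('a \<Rightarrow> 'a \<Rightarrow> bool) \<Rightarrow> bool" where
  "tree V E \<longleftrightarrow> graph V E \<and> V \<noteq> {} \<and> connected_graph V E \<and> (\<nexists>cs. is_cycle E cs)"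

definition degree :: "'a set \<Rightarrow> ('a \<Rightarrow> 'a \<Rightarrow> bool) \<Rightarrow> 'a \<Rightarrow> nat" where
  "degree V E u = card {v \<in> V. E u v}"

definition subcubic :: "'a set \<Rightarrow> ('a \<Rightarrow> 'a \<Rightarrow> bool) \<Rightarrow> bool" where
  "subcubic V E \<longleftrightarrow> (\<forall>u\<in>V. degree V E u \<le> 3)"

definition deg_set :: "'a set \<Rightarrow> ('a \<Rightarrow> 'a \<Rightarrow> bool) \<Rightarrow> nat \<Rightarrow> 'a set" where
  "deg_set V E i = {u \<in> V. degree V E u = i}"

definition nbhd :: "'a set \<Rightarrow> ('a \<Rightarrow> 'a \<Rightarrow> bool) \<Rightarrow> 'a set \<Rightarrow> 'a set" where
  "nbhd V E X = {v \<in> V. \<exists>x\<in>X. E x v}"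

definition half_pow :: "enat \<Rightarrow> real" where
  "half_pow d = (case d of enat n \<Rightarrow> (1/2) powi (int n - 1) | \<infinity> \<Rightarrow> 0)"

definition weight :: "('a \<Rightarrow> 'a \<Rightarrow> bool) \<Rightarrow> 'a set \<Rightarrow> 'a \<Rightarrow> real" where
  "weight E D u = (\<Sum>v\<in>D. half_pow (gdist E u v))"

definition porous_exp_dom :: "'a set \<Rightarrow> ('a \<Rightarrow> 'a \<Rightarrow> bool) \<Rightarrow> 'a set \<Rightarrow> bool" where
  "porous_exp_dom V E D \<longleftrightarrow> D \<subseteq> V \<and> (\<forall>u\<in>V. weight E D u \<ge> 1)"

definition gamma_e :: "'a set \<Rightarrow> ('a \<Rightarrow> 'a \<Rightarrow> bool) \<Rightarrow> nat" where
  "gamma_e V E = (LEAST k. \<exists>D. porous_exp_dom V E D \<and> card D = k)"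

definition min_porous_exp_dom :: "'a set \<Rightarrow> ('a \<Rightarrow> 'a \<Rightarrow> bool) \<Rightarrow> 'a set \<Rightarrow> bool" where
  "min_porous_exp_dom V E D \<longleftrightarrow> porous_exp_dom V E D \<and> card D = gamma_e V E"

text \<open>Optimum value of the LP (infimum of feasible objective values; attained since the
  feasible region is a nonempty polyhedron and the objective is bounded below by 0).\<close>
definition gamma_ef :: "'a set \<Rightarrow> ('a \<Rightarrow> 'a \<Rightarrow> bool) \<Rightarrow> real" where
  "gamma_ef V E = Inf {(\<Sum>u\<in>V. x u) | x :: 'a \<Rightarrow> real.
      (\<forall>u\<in>V. x u \<ge> 0) \<and>
      (\<forall>v\<in>V. (\<Sum>u\<in>V. half_pow (gdist E u v) * x u) \<ge> 1)}"

end

theory Submission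
  imports Defs
begin


fun wk :: "('a \<Rightarrow> 'a \<Rightarrow> bool) \<Rightarrow> 'a list \<Rightarrow> bool" where
  "wk E [] = True" | "wk E [x] = True" | "wk E (x#y#xs) = (E x y \<and> wk E (y#xs))"

lemma wk_append: "wk E (xs @ ys) \<longleftrightarrow> wk E xs \<and> wk E ys \<and> (xs \<noteq> [] \<longrightarrow> ys \<noteq> [] \<longrightarrow> E (last xs) (hd ys))"
proof (induction E xs rule: wk.induct)
  case (2 E x) then show ?case by (cases ys) auto
qed auto

lemma wk_nth: "wk E xs \<longleftrightarrow> (\<forall>i. Suc i < length xs \<longrightarrow> E (xs!i) (xs!Suc i))"
proof (induction E xs rule: wk.induct)
  case (3 E x y xs)
  show ?case
  proof
    assume h: "wk E (x # y # xs)"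
    show "\<forall>i. Suc i < length (x # y # xs) \<longrightarrow> E ((x # y # xs) ! i) ((x # y # xs) ! Suc i)"
    proof (intro allI impI)
      fix i assume "Suc i < length (x # y # xs)"
      then show "E ((x # y # xs) ! i) ((x # y # xs) ! Suc i)"
        using h 3 by (cases i) auto
    qed
  next
    assume h: "\<forall>i. Suc i < length (x # y # xs) \<longrightarrow> E ((x # y # xs) ! i) ((x # y # xs) ! Suc i)"
    have "E x y" using h[rule_format, of 0] by simp
    moreover have "wk E (y#xs)" using 3 h[rule_format, of "Suc i" for i] by auto
    ultimately show "wk E (x # y # xs)" by simp
  qed
qed auto

lemma wk_rev: "(\<And>u v. E u v \<Longrightarrow> E v u) \<Longrightarrow> wk E xs \<Longrightarrow> wk E (rev xs)"
proof (induction xs)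
  case (Cons x xs)
  have "wk E xs" using Cons.prems(2) by (cases xs) auto
  then have "wk E (rev xs)" using Cons by auto
  moreover have "xs \<noteq> [] \<longrightarrow> E (hd xs) x" using Cons.prems by (cases xs) auto
  ultimately show ?case by (auto simp: wk_append last_rev)
qed auto

lemma wk_concat: "wk E ys \<Longrightarrow> wk E zs \<Longrightarrow> ys \<noteq> [] \<Longrightarrow> zs \<noteq> [] \<Longrightarrow> last ys = hd zs \<Longrightarrow> wk E (ys @ tl zs)"
proof -
  assume a: "wk E ys" "wk E zs" "ys \<noteq> []" "zs \<noteq> []" "last ys = hd zs"
  then obtain z zs' where zs: "zs = z # zs'" by (cases zs) auto
  have "wk E zs'" using a(2) zs by (cases zs') auto
  moreover have "zs' \<noteq> [] \<longrightarrow> E (last ys) (hd zs')" using a zs by (cases zs') auto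
  ultimately show ?thesis using a zs by (auto simp: wk_append)
qed

lemma wk_drop: "wk E xs \<Longrightarrow> wk E (drop i xs)"
  using wk_append[of E "take i xs" "drop i xs"] by simp

lemma relpow_wk: "(a,b) \<in> edge_rel E ^^ n \<longleftrightarrow> (\<exists>xs. wk E (a#xs) \<and> length xs = n \<and> last (a#xs) = b)"
proof (induction n arbitrary: a)
  case 0 then show ?case by auto
next
  case (Suc n)
  show ?case
  proof
    assume "(a,b) \<in> edge_rel E ^^ Suc n"
    then obtain c where c: "(a,c) \<in> edge_rel E" "(c,b) \<in> edge_rel E ^^ n" using relpow_Suc_D2 by metis
    then obtain xs where "wk E (c#xs)" "length xs = n" "last (c#xs) = b" using Suc by auto
    then show "\<exists>xs. wk E (a#xs) \<and> length xs = Suc n \<and> last (a#xs) = b"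
      using c(1) by (intro exI[of _ "c#xs"]) (auto simp: edge_rel_def)
  next
    assume "\<exists>xs. wk E (a#xs) \<and> length xs = Suc n \<and> last (a#xs) = b"
    then obtain c xs where h: "wk E (a#c#xs)" "length xs = n" "last (c#xs) = b"
      by (metis Suc_length_conv last_ConsR list.discI)
    then have "(c,b) \<in> edge_rel E ^^ n" using Suc by auto
    moreover have "(a,c) \<in> edge_rel E" using h by (auto simp: edge_rel_def)
    ultimately show "(a,b) \<in> edge_rel E ^^ Suc n" using relpow_Suc_I2 by metis
  qed
qed


locale tr =
  fixes V :: "'a set" and E :: "'a \<Rightarrow> 'a \<Rightarrow> bool"
  assumes tree: "tree V E"
begin

lemma finV: "finite V" using tree by (auto simp: tree_def graph_def)
lemma EV: "E u v \<Longrightarrow> u \<in> V \<and> v \<in> V" using tree by (auto simp: tree_def graph_def)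
lemma Esym: "E u v \<Longrightarrow> E v u" using tree by (auto simp: tree_def graph_def)
lemma Eirr: "\<not> E u u" using tree by (auto simp: tree_def graph_def)
lemma nocyc: "\<not> is_cycle E cs" using tree by (auto simp: tree_def)
lemma conn: "u \<in> V \<Longrightarrow> v \<in> V \<Longrightarrow> \<exists>n. (u,v) \<in> edge_rel E ^^ n"
  using tree by (auto simp: tree_def connected_graph_def gdist_def split: if_splits)

definition dd :: "'a \<Rightarrow> 'a \<Rightarrow> nat" where "dd u v = (LEAST n. (u,v) \<in> edge_rel E ^^ n)"

lemma gdist_dd: "u \<in> V \<Longrightarrow> v \<in> V \<Longrightarrow> gdist E u v = enat (dd u v)"
  using conn by (auto simp: gdist_def dd_def)

lemma dd_walk: assumes "u \<in> V" "v \<in> V" shows "\<exists>xs. wk E (u#xs) \<and> length xs = dd u v \<and> last (u#xs) = v"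
proof -
  obtain n where "(u,v) \<in> edge_rel E ^^ n" using conn assms by blast
  then have "(u,v) \<in> edge_rel E ^^ dd u v" unfolding dd_def by (rule LeastI)
  then show ?thesis by (simp only: relpow_wk)
qed

lemma walk_dd: assumes "wk E (u#xs)" "last (u#xs) = v" shows "dd u v \<le> length xs"
proof -
  have "(u,v) \<in> edge_rel E ^^ length xs" unfolding relpow_wk using assms by (intro exI[of _ xs]) simp
  then show ?thesis unfolding dd_def by (rule Least_le)
qed

lemma dd_self: "dd u u = 0" using walk_dd[of u "[]"] by simp

lemma dd_sym: assumes a: "u \<in> V" "v \<in> V" shows "dd u v \<le> dd v u"
proof -
  obtain xs where h: "wk E (v#xs)" "length xs = dd v u" "last (v#xs) = u" using dd_walk a by blast
  have r: "wk E (rev (v#xs))" using wk_rev[OF Esym h(1)] by blast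
  obtain r rs where rr: "rev (v#xs) = r # rs" by (cases "rev (v#xs)") auto
  have "hd (rev (v#xs)) = last (v#xs)" by (rule hd_rev)
  then have "r = u" unfolding rr using h(3) by simp
  then have w: "wk E (u # rs)" using r rr by simp
  have "last (rev (v#xs)) = hd (v#xs)" by (rule last_rev)
  then have "last (r # rs) = v" unfolding rr by simp
  then have "last (u # rs) = v" using \<open>r = u\<close> by simp
  then have "dd u v \<le> length rs" using walk_dd[OF w] by blast
  moreover have "length rs = length xs" using arg_cong[OF rr, of length] by simp
  ultimately show ?thesis using h(2) by simp
qed

lemma dd_commute: assumes "u \<in> V" "v \<in> V" shows "dd u v = dd v u"
  using dd_sym[OF assms] dd_sym[OF assms(2,1)] by linarith

lemma dd_0: assumes "u \<in> V" "v \<in> V" "dd u v = 0" shows "u = v"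
proof -
  obtain xs where h: "wk E (u#xs)" "length xs = dd u v" "last (u#xs) = v" using dd_walk assms(1,2) by blast
  then have "xs = []" using assms(3) by simp
  then show ?thesis using h(3) by simp
qed

lemma dd_step: assumes a: "E p q" "x \<in> V" shows "dd p x \<le> dd q x + 1"
proof -
  obtain xs where h: "wk E (q#xs)" "length xs = dd q x" "last (q#xs) = x" using dd_walk a EV by blast
  have w: "wk E (p#q#xs)" using h a by simp
  have "last (p#q#xs) = x" using h(3) by simp
  then have "dd p x \<le> length (q#xs)" using walk_dd[OF w] by blast
  then show ?thesis using h by simp
qed

lemma dd_suffix: "wk E ys \<Longrightarrow> i < length ys \<Longrightarrow> dd (ys!i) (last ys) \<le> length ys - 1 - i"
proof -
  assume a: "wk E ys" "i < length ys"
  have d: "drop i ys = ys!i # drop (Suc i) ys" using a(2) by (simp add: Cons_nth_drop_Suc)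
  have "wk E (drop i ys)" using wk_drop a(1) by blast
  moreover have "last (drop i ys) = last ys" using a(2) by (simp add: last_drop)
  ultimately have "dd (ys!i) (last ys) \<le> length (drop (Suc i) ys)" using walk_dd[of "ys!i" "drop (Suc i) ys" "last ys"] d by simp
  then show ?thesis by simp
qed


lemma nocyc_lemma:
  assumes "E w p1" "E w p2" "p1 \<noteq> p2"
  shows "wk E ys \<Longrightarrow> ys \<noteq> [] \<Longrightarrow> hd ys = p1 \<Longrightarrow> last ys = p2 \<Longrightarrow> w \<notin> set ys \<Longrightarrow> False"
proof (induction "length ys" arbitrary: ys rule: less_induct)
  case less
  show ?case
  proof (cases "distinct ys")
    case True
    have "is_cycle E (w#ys)"
      unfolding is_cycle_def
    proof (intro conjI)
      have "ys \<noteq> [p1]"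
      proof
        assume "ys = [p1]" then show False using less(5) assms(3) by simp
      qed
      obtain y ys' where yy: "ys = y # ys'" using less(3) by (cases ys) auto
      then have "ys' \<noteq> []" using less(4) \<open>ys \<noteq> [p1]\<close> by auto
      then have "length ys \<ge> 2" using yy by (cases ys') auto
      then show "3 \<le> length (w#ys)" by simp
      show "distinct (w#ys)" using True less(6) by simp
      have "wk E (w#ys)" using less(2,3,4) assms(1) by (cases ys) auto
      then show "\<forall>i<length (w # ys) - 1. E ((w # ys) ! i) ((w # ys) ! Suc i)"
        by (auto simp: wk_nth)
      show "E (last (w # ys)) (hd (w # ys))" using less(3,5) assms(2) Esym by simp
    qed
    then show False using nocyc by simp
  next
    case False
    then obtain as c bs cs where ys: "ys = as @ [c] @ bs @ [c] @ cs" using not_distinct_decomp by blast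
    define zs where "zs = as @ [c] @ cs"
    have w1: "wk E (c # bs @ c # cs)" using less(2) unfolding ys by (simp add: wk_append)
    have "wk E (c#cs)" using w1 wk_append[of E "c#bs" "c#cs"] by simp
    then have W: "wk E zs" using less(2) unfolding ys zs_def by (auto simp: wk_append)
    have N: "zs \<noteq> []" "w \<notin> set zs" and Lz: "length zs < length ys"
      using less(6) unfolding ys zs_def by auto
    have H: "hd zs = p1"
      using less(4) unfolding ys zs_def by (cases as) auto
    have L: "last zs = p2"
      using less(5) unfolding ys zs_def by (cases cs) auto
    show False by (rule less(1)[OF Lz W N(1) H L N(2)])
  qed
qed

lemma avoid2:
  assumes "E w a" "E w b" "a \<noteq> b" "wk E A" "A \<noteq> []" "hd A = a" "wk E B" "B \<noteq> []" "hd B = b"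
    "last A = last B" "w \<notin> set A" "w \<notin> set B"
  shows False
proof -
  obtain r rs where rB: "rev B = r # rs" using assms(8) by (cases "rev B") auto
  have r: "r = last B" using arg_cong[OF rB, of hd] by (simp add: hd_rev)
  have wr: "wk E (r#rs)" using wk_rev[OF Esym assms(7)] rB by simp
  define ys where "ys = A @ rs"
  have W: "wk E ys" unfolding ys_def using wk_concat[OF assms(4) wr assms(5)] assms(10) r by simp
  have L: "last ys = b"
  proof (cases "rs = []")
    case True
    then have "B = [r]" using rB by (simp add: rev_swap)
    then show ?thesis using True assms(9,10) by (simp add: ys_def)
  next
    case False
    then have "last ys = last rs" by (simp add: ys_def)
    also have "\<dots> = last (rev B)" using rB False by simp
    also have "\<dots> = b" using assms(8,9) by (simp add: last_rev)
    finally show ?thesis .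
  qed
  have "set rs \<subseteq> set B" using arg_cong[OF rB, of set] by auto
  then have N: "w \<notin> set ys" unfolding ys_def using assms(11,12) by auto
  have H: "ys \<noteq> []" "hd ys = a" using assms(5,6) by (auto simp: ys_def)
  show False by (rule nocyc_lemma[OF assms(1-3) W H L N])
qed

end


context tr begin

lemma walk_in_V: "wk E (a#xs) \<Longrightarrow> xs \<noteq> [] \<Longrightarrow> a \<in> V"
  using EV by (cases xs) auto

lemma dd_neq: assumes pq: "E p q" and x: "x \<in> V" shows "dd p x \<noteq> dd q x"
proof
  assume eq: "dd p x = dd q x"
  have pV: "p \<in> V" and qV: "q \<in> V" using EV pq by auto
  obtain xs where A: "wk E (p#xs)" "length xs = dd p x" "last (p#xs) = x" using dd_walk pV x by blast
  obtain ys0 where B: "wk E (q#ys0)" "length ys0 = dd q x" "last (q#ys0) = x" using dd_walk qV x by blast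
  show False
  proof (cases "dd q x = 0")
    case True
    then have "q = x" "p = x" using dd_0 qV pV x eq by auto
    then show False using pq Eirr by simp
  next
    case False
    then obtain y1 ys where ys0: "ys0 = y1 # ys" using B(2) by (cases ys0) auto
    have Eqy: "E q y1" using B(1) ys0 by simp
    have "dd ((q#y1#ys)!1) (last (q#y1#ys)) \<le> length (q#y1#ys) - 1 - 1"
      by (rule dd_suffix) (use B(1) ys0 in auto)
    then have d1: "dd y1 x \<le> dd q x - 1" using B ys0 by simp
    have ne: "p \<noteq> y1" using d1 eq False by auto
    have q1: "q \<notin> set (p#xs)"
    proof
      assume "q \<in> set (p#xs)"
      then have "\<exists>i<length (p#xs). (p#xs)!i = q" by (simp only: in_set_conv_nth)
    then obtain i where i: "i < length (p#xs)" "(p#xs)!i = q" by blast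
      have "dd ((p#xs)!i) (last (p#xs)) \<le> length (p#xs) - 1 - i" by (rule dd_suffix[OF A(1) i(1)])
      then have "dd q x \<le> dd p x - i" using i A by simp
      then have "i = 0" using eq False by simp
      then show False using i pq Eirr by simp
    qed
    have q2: "q \<notin> set (y1#ys)"
    proof
      assume "q \<in> set (y1#ys)"
      then have "\<exists>i<length (y1#ys). (y1#ys)!i = q" by (simp only: in_set_conv_nth)
    then obtain i where i: "i < length (y1#ys)" "(y1#ys)!i = q" by blast
      have "dd ((q#y1#ys)!(Suc i)) (last (q#y1#ys)) \<le> length (q#y1#ys) - 1 - Suc i"
        by (rule dd_suffix) (use B(1) ys0 i in auto)
      then have "dd q x \<le> dd q x - 1 - i" using i B ys0 by simp
      then show False using False by simp
    qed
    have wy: "wk E (y1#ys)" using B(1) ys0 by simp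
    have "last (p#xs) = last (y1#ys)" using A(3) B(3) ys0 by simp
    then show False
      using avoid2[of q p y1 "p#xs" "y1#ys"] Esym[OF pq] Eqy ne A(1) wy q1 q2 by simp
  qed
qed

lemma dd_dir: assumes "E p q" "x \<in> V" shows "dd p x = dd q x + 1 \<or> dd q x = dd p x + 1"
  using dd_step[OF assms] dd_step[OF Esym[OF assms(1)] assms(2)] dd_neq[OF assms] by linarith

lemma parent_ex: assumes "w \<in> V" "x \<in> V" "w \<noteq> x" shows "\<exists>p. E w p \<and> dd w x = dd p x + 1"
proof -
  obtain ys0 where B: "wk E (w#ys0)" "length ys0 = dd w x" "last (w#ys0) = x" using dd_walk assms by blast
  have "dd w x \<noteq> 0" using dd_0 assms by blast
  then obtain p ys where ys0: "ys0 = p # ys" using B(2) by (cases ys0) auto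
  have Ep: "E w p" using B(1) ys0 by simp
  have "dd ((w#p#ys)!1) (last (w#p#ys)) \<le> length (w#p#ys) - 1 - 1"
    by (rule dd_suffix) (use B(1) ys0 in auto)
  then have "dd p x \<le> dd w x - 1" using B ys0 by simp
  moreover have "dd w x \<le> dd p x + 1" using dd_step[OF Ep assms(2)] .
  ultimately show ?thesis using Ep \<open>dd w x \<noteq> 0\<close> by (intro exI[of _ p]) auto
qed

lemma parent_uniq: assumes "E w p1" "E w p2" "x \<in> V" "dd w x = dd p1 x + 1" "dd w x = dd p2 x + 1"
  shows "p1 = p2"
proof (rule ccontr)
  assume ne: "p1 \<noteq> p2"
  have V: "p1 \<in> V" "p2 \<in> V" using EV assms by auto
  obtain xs1 where A: "wk E (p1#xs1)" "length xs1 = dd p1 x" "last (p1#xs1) = x" using dd_walk V assms(3) by blast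
  obtain xs2 where B: "wk E (p2#xs2)" "length xs2 = dd p2 x" "last (p2#xs2) = x" using dd_walk V assms(3) by blast
  have n1: "w \<notin> set (p1#xs1)"
  proof
    assume "w \<in> set (p1#xs1)"
    then have "\<exists>i<length (p1#xs1). (p1#xs1)!i = w" by (simp only: in_set_conv_nth)
    then obtain i where i: "i < length (p1#xs1)" "(p1#xs1)!i = w" by blast
    have "dd ((p1#xs1)!i) (last (p1#xs1)) \<le> length (p1#xs1) - 1 - i" by (rule dd_suffix[OF A(1) i(1)])
    then show False using i A assms(4) by simp
  qed
  have n2: "w \<notin> set (p2#xs2)"
  proof
    assume "w \<in> set (p2#xs2)"
    then have "\<exists>i<length (p2#xs2). (p2#xs2)!i = w" by (simp only: in_set_conv_nth)
    then obtain i where i: "i < length (p2#xs2)" "(p2#xs2)!i = w" by blast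
    have "dd ((p2#xs2)!i) (last (p2#xs2)) \<le> length (p2#xs2) - 1 - i" by (rule dd_suffix[OF B(1) i(1)])
    then show False using i B assms(5) by simp
  qed
  show False using avoid2[of w p1 p2 "p1#xs1" "p2#xs2"] assms(1,2) ne A B n1 n2 by simp
qed

end


context tr begin

definition Lo where "Lo u v = {w \<in> V. E v w \<and> dd w u < dd v u}"
definition Up where "Up u v = {w \<in> V. E v w \<and> dd v u < dd w u}"

lemma Lo_card: assumes "u \<in> V" "v \<in> V" shows "card (Lo u v) = (if v = u then 0 else 1)"
proof (cases "v = u")
  case True then show ?thesis by (simp add: Lo_def dd_self)
next
  case False
  obtain p where p: "E v p" "dd v u = dd p u + 1" using parent_ex[OF assms(2,1) False] by blast
  have "Lo u v = {p}"
  proof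
    have "p \<in> V" using EV[OF p(1)] by simp
    then show "{p} \<subseteq> Lo u v" using p unfolding Lo_def by simp
    show "Lo u v \<subseteq> {p}"
    proof
      fix w assume w: "w \<in> Lo u v"
      then have "E v w" "dd w u < dd v u" by (auto simp: Lo_def)
      then have "dd v u = dd w u + 1" using dd_dir[OF \<open>E v w\<close> assms(1)] by linarith
      then have "w = p" using parent_uniq[OF \<open>E v w\<close> p(1) assms(1)] p(2) by linarith
      then show "w \<in> {p}" by simp
    qed
  qed
  then show ?thesis using False by simp
qed

lemma deg_split: assumes "u \<in> V" "v \<in> V" shows "degree V E v = card (Lo u v) + card (Up u v)"
proof -
  have "{w \<in> V. E v w} = Lo u v \<union> Up u v"
  proof
    show "{w \<in> V. E v w} \<subseteq> Lo u v \<union> Up u v"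
    proof
      fix w assume "w \<in> {w \<in> V. E v w}"
      then have w: "w \<in> V" "E v w" by auto
      have "dd v u \<noteq> dd w u" using dd_neq[OF w(2) assms(1)] .
      then have "dd w u < dd v u \<or> dd v u < dd w u" by linarith
      then show "w \<in> Lo u v \<union> Up u v" using w by (auto simp: Lo_def Up_def)
    qed
    show "Lo u v \<union> Up u v \<subseteq> {w \<in> V. E v w}" by (auto simp: Lo_def Up_def)
  qed
  moreover have "Lo u v \<inter> Up u v = {}" by (auto simp: Lo_def Up_def)
  moreover have "finite (Lo u v)" "finite (Up u v)" using finV by (auto simp: Lo_def Up_def)
  ultimately show ?thesis unfolding degree_def by (simp add: card_Un_disjoint)
qed


lemma ident: assumes u: "u \<in> V"
  shows "(\<Sum>v\<in>V. (3 - real (degree V E v)) * (1/2)^(dd v u)) = 3"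
proof -
  define q where "q v = (1/2::real)^(dd v u)" for v
  define S where "S = (\<Sum>v\<in>V. q v)"
  have fin: "finite V" by (rule finV)
  have lo: "(\<Sum>v\<in>V. real (card (Lo u v)) * q v) = S - 1"
  proof -
    have "(\<Sum>v\<in>V. real (card (Lo u v)) * q v) = (\<Sum>v\<in>V. q v - (if v = u then q v else 0))"
      using Lo_card u by (intro sum.cong) auto
    also have "\<dots> = (\<Sum>v\<in>V. q v) - (\<Sum>v\<in>V. if v = u then q v else 0)"
      by (rule sum_subtractf)
    also have "(\<Sum>v\<in>V. if v = u then q v else 0) = q u"
      using sum.delta[OF fin, of u q] u by simp
    also have "q u = 1" by (simp add: q_def dd_self)
    finally show ?thesis by (simp add: S_def)
  qed
  have up: "(\<Sum>v\<in>V. real (card (Up u v)) * q v) = (\<Sum>w\<in>V. 2 * real (card (Lo u w)) * q w)"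
  proof -
    have "(\<Sum>v\<in>V. real (card (Up u v)) * q v) = (\<Sum>v\<in>V. \<Sum>w\<in>Up u v. q v)" by simp
    also have "\<dots> = (\<Sum>v\<in>V. \<Sum>w\<in>V. if E v w \<and> dd v u < dd w u then q v else 0)"
      unfolding Up_def by (rule sum.cong[OF refl]) (rule sum.inter_filter[OF fin])
    also have "\<dots> = (\<Sum>w\<in>V. \<Sum>v\<in>V. if E v w \<and> dd v u < dd w u then q v else 0)"
      by (rule sum.swap)
    also have "\<dots> = (\<Sum>w\<in>V. \<Sum>v\<in>V. if E w v \<and> dd v u < dd w u then q v else 0)"
      proof (intro sum.cong refl)
      fix w v
      have "E v w = E w v" using Esym by blast
      then show "(if E v w \<and> dd v u < dd w u then q v else 0) = (if E w v \<and> dd v u < dd w u then q v else 0)" by simp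
    qed
    also have "\<dots> = (\<Sum>w\<in>V. \<Sum>v\<in>Lo u w. q v)"
      unfolding Lo_def by (rule sum.cong[OF refl]) (rule sum.inter_filter[OF fin, symmetric])
    also have "\<dots> = (\<Sum>w\<in>V. \<Sum>v\<in>Lo u w. 2 * q w)"
    proof (intro sum.cong refl)
      fix w v assume "w \<in> V" "v \<in> Lo u w"
      then have "E w v" "dd v u < dd w u" by (auto simp: Lo_def)
      then have "dd w u = dd v u + 1" using dd_dir[OF \<open>E w v\<close> u] by linarith
      then show "q v = 2 * q w" by (simp add: q_def)
    qed
    also have "\<dots> = (\<Sum>w\<in>V. 2 * real (card (Lo u w)) * q w)" by (simp add: mult_ac)
    finally show ?thesis .
  qed
  have "(\<Sum>v\<in>V. real (degree V E v) * q v) = (\<Sum>v\<in>V. real (card (Lo u v)) * q v + real (card (Up u v)) * q v)"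
    using deg_split u by (intro sum.cong refl) (simp add: distrib_right)
  also have "\<dots> = (\<Sum>v\<in>V. real (card (Lo u v)) * q v) + (\<Sum>v\<in>V. real (card (Up u v)) * q v)"
    by (rule sum.distrib)
  also have "\<dots> = (\<Sum>v\<in>V. real (card (Lo u v)) * q v) + 2 * (\<Sum>w\<in>V. real (card (Lo u w)) * q w)"
    unfolding up by (simp add: sum_distrib_left mult.assoc)
  also have "\<dots> = 3 * (S - 1)" unfolding lo by simp
  finally have dg: "(\<Sum>v\<in>V. real (degree V E v) * q v) = 3 * (S - 1)" .
  have "(\<Sum>v\<in>V. (3 - real (degree V E v)) * q v) = (\<Sum>v\<in>V. 3 * q v - real (degree V E v) * q v)"
    by (simp add: left_diff_distrib)
  also have "\<dots> = 3 * S - (\<Sum>v\<in>V. real (degree V E v) * q v)"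
    by (simp add: S_def sum_subtractf sum_distrib_left)
  finally show ?thesis using dg by (simp add: q_def)
qed

end



lemma half_pow_enat: "half_pow (enat n) = 2 * (1/2::real)^n"
proof -
  have "half_pow (enat n) = (1/2::real) powi (int n - 1)" by (simp add: half_pow_def)
  also have "\<dots> = (1/2::real) powi (int n) / (1/2) powi 1" by (rule power_int_diff) simp
  also have "\<dots> = 2 * (1/2::real)^n" by (simp add: power_int_of_nat)
  finally show ?thesis .
qed

lemma sum_split: assumes "finite A" shows "sum f A = sum f {x\<in>A. P x} + sum f {x\<in>A. \<not> P x}"
proof -
  have "A = {x\<in>A. P x} \<union> {x\<in>A. \<not> P x}" by auto
  then have "sum f A = sum f ({x\<in>A. P x} \<union> {x\<in>A. \<not> P x})" by simp
  also have "\<dots> = sum f {x\<in>A. P x} + sum f {x\<in>A. \<not> P x}"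
    by (rule sum.union_disjoint) (use assms in auto)
  finally show ?thesis .
qed

locale main = tr +
  fixes D
  assumes sub: "subcubic V E" and eqg: "real (gamma_e V E) = gamma_ef V E"
    and gt: "gamma_ef V E > 1" and minD: "min_porous_exp_dom V E D"
begin

definition wt where "wt u = (\<Sum>d\<in>D. 2 * (1/2::real)^(dd u d))"
definition y where "y v = (3 - real (degree V E v)) / 6"

lemma DV: "D \<subseteq> V" using minD by (simp add: min_porous_exp_dom_def porous_exp_dom_def)
lemma finD: "finite D" using DV finV finite_subset by blast
lemma cardD: "real (card D) = gamma_ef V E"
  using minD eqg by (simp add: min_porous_exp_dom_def)

lemma hp: "u \<in> V \<Longrightarrow> v \<in> V \<Longrightarrow> half_pow (gdist E u v) = 2 * (1/2)^(dd u v)"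
  by (simp add: gdist_dd half_pow_enat)

lemma weight_wt: "u \<in> V \<Longrightarrow> weight E D u = wt u"
  unfolding weight_def wt_def using DV by (intro sum.cong refl) (auto simp: hp)

lemma wt_ge: "u \<in> V \<Longrightarrow> wt u \<ge> 1"
  using minD weight_wt by (simp add: min_porous_exp_dom_def porous_exp_dom_def)

lemma deg3: "v \<in> V \<Longrightarrow> degree V E v \<le> 3" using sub by (simp add: subcubic_def)

lemma y_nonneg: "v \<in> V \<Longrightarrow> y v \<ge> 0" using deg3[of v] by (simp add: y_def)

lemma col: assumes "v \<in> V" shows "(\<Sum>u\<in>V. half_pow (gdist E u v) * y u) = 1"
proof -
  have "(\<Sum>u\<in>V. half_pow (gdist E u v) * y u) = (\<Sum>u\<in>V. (1/3) * ((3 - real (degree V E u)) * (1/2)^(dd u v)))"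
    using assms by (intro sum.cong refl) (simp add: hp y_def)
  also have "\<dots> = (1/3) * (\<Sum>u\<in>V. (3 - real (degree V E u)) * (1/2)^(dd u v))"
    by (simp add: sum_distrib_left)
  also have "\<dots> = 1" using ident[OF assms] by simp
  finally show ?thesis .
qed

lemma slack: assumes "u \<in> V" "degree V E u < 3" shows "wt u = 1"
proof -
  define Y where "Y = (\<Sum>u\<in>V. y u)"
  have "Y \<in> {(\<Sum>u\<in>V. x u) | x :: 'a \<Rightarrow> real.
      (\<forall>u\<in>V. x u \<ge> 0) \<and> (\<forall>v\<in>V. (\<Sum>u\<in>V. half_pow (gdist E u v) * x u) \<ge> 1)}"
  proof -
    have "(\<forall>u\<in>V. y u \<ge> 0) \<and> (\<forall>v\<in>V. (\<Sum>u\<in>V. half_pow (gdist E u v) * y u) \<ge> 1)"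
      using y_nonneg col by simp
    then show ?thesis unfolding Y_def by (intro CollectI exI[of _ y]) simp
  qed
  moreover have "bdd_below {(\<Sum>u\<in>V. x u) | x :: 'a \<Rightarrow> real.
      (\<forall>u\<in>V. x u \<ge> 0) \<and> (\<forall>v\<in>V. (\<Sum>u\<in>V. half_pow (gdist E u v) * x u) \<ge> 1)}"
  proof (rule bdd_belowI[of _ 0])
    fix z assume "z \<in> {(\<Sum>u\<in>V. x u) | x :: 'a \<Rightarrow> real.
      (\<forall>u\<in>V. x u \<ge> 0) \<and> (\<forall>v\<in>V. (\<Sum>u\<in>V. half_pow (gdist E u v) * x u) \<ge> 1)}"
    then obtain x where "z = (\<Sum>u\<in>V. x u)" "\<forall>u\<in>V. x u \<ge> 0" by auto
    then show "0 \<le> z" by (simp add: sum_nonneg)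
  qed
  ultimately have g: "gamma_ef V E \<le> Y" unfolding gamma_ef_def by (rule cInf_lower)
  have "(\<Sum>u\<in>V. y u * wt u) = (\<Sum>u\<in>V. \<Sum>d\<in>D. half_pow (gdist E u d) * y u)"
  proof (rule sum.cong[OF refl])
    fix u assume u: "u \<in> V"
    have "y u * wt u = (\<Sum>d\<in>D. y u * (2 * (1/2)^(dd u d)))" unfolding wt_def by (rule sum_distrib_left)
    also have "\<dots> = (\<Sum>d\<in>D. half_pow (gdist E u d) * y u)"
    proof (rule sum.cong[OF refl])
      fix d assume "d \<in> D"
      then have "d \<in> V" using DV by blast
      then show "y u * (2 * (1/2)^(dd u d)) = half_pow (gdist E u d) * y u" using hp[OF u] by simp
    qed
    finally show "y u * wt u = (\<Sum>d\<in>D. half_pow (gdist E u d) * y u)" .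
  qed
  also have "\<dots> = (\<Sum>d\<in>D. \<Sum>u\<in>V. half_pow (gdist E u d) * y u)" by (rule sum.swap)
  also have "\<dots> = (\<Sum>d\<in>D. 1)"
  proof (rule sum.cong[OF refl])
    fix d assume "d \<in> D" then show "(\<Sum>u\<in>V. half_pow (gdist E u d) * y u) = 1" using DV col[of d] by auto
  qed
  finally have s: "(\<Sum>u\<in>V. y u * wt u) = real (card D)" by simp
  have "(\<Sum>u\<in>V. y u * (wt u - 1)) = (\<Sum>u\<in>V. y u * wt u) - Y"
    by (simp add: Y_def right_diff_distrib sum_subtractf)
  also have "\<dots> \<le> 0" using s g cardD by simp
  finally have le: "(\<Sum>u\<in>V. y u * (wt u - 1)) \<le> 0" .
  have nn: "\<forall>u\<in>V. 0 \<le> y u * (wt u - 1)" using y_nonneg wt_ge by simp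
  have "0 \<le> (\<Sum>u\<in>V. y u * (wt u - 1))" by (rule sum_nonneg) (use nn in auto)
  then have "(\<Sum>u\<in>V. y u * (wt u - 1)) = 0" using le by linarith
  then have "\<forall>u\<in>V. y u * (wt u - 1) = 0"
    using sum_nonneg_eq_0_iff[OF finV, of "\<lambda>u. y u * (wt u - 1)"] nn by simp
  then have "y u * (wt u - 1) = 0" using assms by blast
  moreover have "y u > 0" using assms by (simp add: y_def)
  ultimately show ?thesis by simp
qed

end



lemma dyadic: "finite S \<Longrightarrow> \<exists>(m::nat) K. (\<Sum>s\<in>S. (1/2::real)^(f s)) = real m / 2^K"
proof (induction S rule: finite_induct)
  case empty then show ?case by (intro exI[of _ 0]) simp
next
  case (insert s S)
  then obtain m K where mK: "(\<Sum>s\<in>S. (1/2::real)^(f s)) = real m / 2^K" by blast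
  have "(\<Sum>s\<in>insert s S. (1/2::real)^(f s)) = (1/2)^(f s) + real m / 2^K" using insert mK by simp
  also have "\<dots> = real (2^K + m * 2^(f s)) / 2^(K + f s)"
    by (simp add: power_add field_simps power_one_over)
  finally show ?case by blast
qed

lemma pow2_mod3: "(2::nat)^K mod 3 = 1 \<or> (2::nat)^K mod 3 = 2"
proof (induction K)
  case 0 then show ?case by simp
next
  case (Suc K)
  have "(2::nat)^Suc K mod 3 = (2 * ((2::nat)^K mod 3)) mod 3" by (simp add: mod_mult_right_eq)
  then show ?case using Suc by auto
qed

lemma not3: "\<not> (3::nat) dvd 2^K" using pow2_mod3[of K] by (auto simp: dvd_eq_mod_eq_0)

context main begin

lemma E_dd1: assumes "E u v" shows "dd u v = 1"
proof -
  have "wk E [u,v]" using assms by simp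
  then have "dd u v \<le> 1" using walk_dd[of u "[v]" v] by simp
  moreover have "dd u v \<noteq> 0"
  proof
    assume "dd u v = 0" then have "u = v" using dd_0 EV[OF assms] by simp
    then show False using assms Eirr by simp
  qed
  ultimately show ?thesis by simp
qed

lemma dd2_mid: assumes "u \<in> V" "w \<in> V" "dd u w = 2" shows "\<exists>v. E u v \<and> E v w"
proof -
  obtain xs where h: "wk E (u#xs)" "length xs = 2" "last (u#xs) = w" using dd_walk[OF assms(1,2)] assms(3) by auto
  then obtain a b where "xs = [a,b]" by (auto simp: numeral_2_eq_2 length_Suc_conv)
  then show ?thesis using h by auto
qed

lemma dd_walk_len: assumes "u \<in> V" "w \<in> V" "dd u w = Suc n"
  shows "\<exists>v. E u v \<and> dd v w = n"
proof -
  have "u \<noteq> w" using assms(3) dd_self[of u] by auto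
  then obtain p where "E u p" "dd u w = dd p w + 1" using parent_ex[OF assms(1,2)] by auto
  then show ?thesis using assms(3) by auto
qed

lemma nbrs: "{p \<in> V. E x p} = {p. E x p}" using EV by auto

lemma deg1_nbr: assumes "degree V E x = 1" "E x v" "E x p" shows "p = v"
proof -
  have "card {p. E x p} = 1" using assms nbrs by (simp add: degree_def)
  then obtain c where c: "{p. E x p} = {c}" by (rule card_1_singletonE)
  have "v \<in> {p. E x p}" "p \<in> {p. E x p}" using assms(2,3) by auto
  then show ?thesis unfolding c by simp
qed

lemma deg2_nbr: assumes "degree V E x = 2" "E x s"
  shows "\<exists>y'. E x y' \<and> y' \<noteq> s \<and> (\<forall>p. E x p \<longrightarrow> p = s \<or> p = y')"
proof -
  have "{p. E x p} \<subseteq> V" using EV by auto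
  then have fin: "finite {p. E x p}" using finV finite_subset by auto
  have "card {p. E x p} = 2" using assms nbrs by (simp add: degree_def)
  then have "card ({p. E x p} - {s}) = 1" using assms(2) fin by (simp add: card_Diff_singleton)
  then obtain c where c: "{p. E x p} - {s} = {c}" by (rule card_1_singletonE)
  then have "E x c" "c \<noteq> s" by auto
  moreover have "\<forall>p. E x p \<longrightarrow> p = s \<or> p = c" using c by auto
  ultimately show ?thesis by blast
qed

lemma deg3_nbr: assumes "degree V E x = 3" "E x a" "E x b" "a \<noteq> b"
  shows "\<exists>z. E x z \<and> z \<noteq> a \<and> z \<noteq> b \<and> (\<forall>p. E x p \<longrightarrow> p = a \<or> p = b \<or> p = z)"
proof -
  have "{p. E x p} \<subseteq> V" using EV by auto
  then have fin: "finite {p. E x p}" using finV finite_subset by auto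
  have "card {p. E x p} = 3" using assms nbrs by (simp add: degree_def)
  then have "card ({p. E x p} - {a,b}) = 1" using assms(2-4) fin by (simp add: card_Diff_subset)
  then obtain c where c: "{p. E x p} - {a,b} = {c}" by (rule card_1_singletonE)
  then have "E x c" "c \<noteq> a" "c \<noteq> b" by auto
  moreover have "\<forall>p. E x p \<longrightarrow> p = a \<or> p = b \<or> p = c" using c by auto
  ultimately show ?thesis by blast
qed

lemma leaf: assumes "degree V E x = 1" "E x v" "d \<in> V" "d \<noteq> x" shows "dd x d = dd v d + 1"
proof -
  have "x \<in> V" using EV assms(2) by blast
  then obtain p where p: "E x p" "dd x d = dd p d + 1" using parent_ex[OF \<open>x \<in> V\<close> assms(3)] assms(4) by auto
  then have "p = v" using deg1_nbr[OF assms(1,2)] by simp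
  then show ?thesis using p by simp
qed

end


context main begin

definition h :: "nat \<Rightarrow> real" where "h k = 2 * (1/2)^k"

lemma wt_h: "wt u = (\<Sum>d\<in>D. h (dd u d))" by (simp add: wt_def h_def)
lemma h_pos: "h k > 0" by (simp add: h_def)
lemma h_Suc: "h (Suc k) = h k / 2" by (simp add: h_def)
lemma h_0: "h 0 = 2" by (simp add: h_def)
lemma h_1: "h 1 = 1" by (simp add: h_def)
lemma h_le: "b \<le> a + 1 \<Longrightarrow> h a \<le> 2 * h b"
proof -
  assume "b \<le> a + 1"
  then have "(1/2::real)^(a+1) \<le> (1/2)^b" by (rule power_decreasing) auto
  then show "h a \<le> 2 * h b" by (simp add: h_def)
qed

lemma sum_half: assumes "\<And>d. d \<in> S \<Longrightarrow> dd p d = dd q d + 1"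
  shows "(\<Sum>d\<in>S. h (dd p d)) = (\<Sum>d\<in>S. h (dd q d)) / 2"
proof -
  have "(\<Sum>d\<in>S. h (dd p d)) = (\<Sum>d\<in>S. h (dd q d) / 2)"
    by (rule sum.cong[OF refl]) (simp add: assms h_Suc)
  then show ?thesis by (simp add: sum_divide_distrib)
qed

lemma wt_split: "wt u = (\<Sum>d\<in>{d\<in>D. P d}. h (dd u d)) + (\<Sum>d\<in>{d\<in>D. \<not> P d}. h (dd u d))"
  unfolding wt_h by (rule sum_split[OF finD])

lemma Dsub: assumes "d \<in> D" shows "degree V E d = 3"
proof -
  have dV: "d \<in> V" using assms DV by blast
  have "h (dd d d) \<le> wt d" unfolding wt_h
    by (rule member_le_sum[OF assms _ finD]) (simp add: less_imp_le h_pos)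
  then have "wt d \<ge> 2" by (simp add: dd_self h_0)
  then have "\<not> degree V E d < 3" using slack[OF dV] by auto
  then show ?thesis using deg3[OF dV] by simp
qed

lemma notD: assumes "degree V E x < 3" shows "x \<notin> D"
proof
  assume "x \<in> D" then have "degree V E x = 3" by (rule Dsub)
  then show False using assms by simp
qed

lemma nbD: assumes x: "x \<in> V" "degree V E x < 3" and Exv: "E x v" shows "v \<notin> D"
proof
  assume vD: "v \<in> D"
  have "real (card D) > 1" using cardD gt by simp
  then have "card (D - {v}) \<ge> 1" using vD finD by (simp add: card_Diff_singleton)
  then have "D - {v} \<noteq> {}" by (intro notI) simp
  then obtain d' where "d' \<in> D - {v}" by blast
  then have d': "d' \<in> D" "d' \<noteq> v" by auto
  have "(\<Sum>d\<in>{v,d'}. h (dd x d)) \<le> wt x" unfolding wt_h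
    by (rule sum_mono2[OF finD]) (use vD d' in \<open>auto simp: less_imp_le h_pos\<close>)
  moreover have "(\<Sum>d\<in>{v,d'}. h (dd x d)) = h (dd x v) + h (dd x d')" using d' by simp
  moreover have "h (dd x v) = 1" using E_dd1[OF Exv] h_1 by simp
  ultimately have "wt x > 1" using h_pos[of "dd x d'"] by linarith
  then show False using slack[OF x] by simp
qed

lemma nb3: assumes x: "x \<in> V" "degree V E x < 3" and Exv: "E x v" shows "degree V E v = 3"
proof (rule ccontr)
  assume "degree V E v \<noteq> 3"
  have vV: "v \<in> V" using EV Exv by blast
  then have dv: "degree V E v < 3" using deg3[OF vV] \<open>degree V E v \<noteq> 3\<close> by simp
  have wx: "wt x = 1" using slack[OF x] .
  have wv: "wt v = 1" using slack[OF vV dv] .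
  define Dx where "Dx = {d\<in>D. dd v d = dd x d + 1}"
  define Dv where "Dv = {d\<in>D. \<not> dd v d = dd x d + 1}"
  have fv: "\<And>d. d \<in> Dv \<Longrightarrow> dd x d = dd v d + 1"
  proof -
    fix d assume "d \<in> Dv"
    then have "d \<in> V" "\<not> dd v d = dd x d + 1" using DV by (auto simp: Dv_def)
    then show "dd x d = dd v d + 1" using dd_dir[OF Exv \<open>d \<in> V\<close>] by simp
  qed
  have fx: "\<And>d. d \<in> Dx \<Longrightarrow> dd v d = dd x d + 1" by (simp add: Dx_def)
  define a where "a = (\<Sum>d\<in>Dx. h (dd x d))"
  define b where "b = (\<Sum>d\<in>Dv. h (dd v d))"
  have sx: "wt x = (\<Sum>d\<in>Dx. h (dd x d)) + (\<Sum>d\<in>Dv. h (dd x d))"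
    unfolding Dx_def Dv_def by (rule wt_split)
  have sv: "wt v = (\<Sum>d\<in>Dx. h (dd v d)) + (\<Sum>d\<in>Dv. h (dd v d))"
    unfolding Dx_def Dv_def by (rule wt_split)
  have s1: "(\<Sum>d\<in>Dv. h (dd x d)) = b / 2" unfolding b_def by (rule sum_half) (rule fv)
  have s2: "(\<Sum>d\<in>Dx. h (dd v d)) = a / 2" unfolding a_def by (rule sum_half) (rule fx)
  have "wt x = a + b / 2" using sx s1 unfolding a_def by simp
  moreover have "wt v = a / 2 + b" using sv s2 unfolding b_def by simp
  ultimately have a: "a = 2/3" using wx wv by linarith
  have "finite Dx" using finD by (simp add: Dx_def)
  then obtain m K where mK: "(\<Sum>d\<in>Dx. (1/2::real)^(dd x d)) = real m / 2^K" using dyadic by blast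
  have "a = 2 * (\<Sum>d\<in>Dx. (1/2::real)^(dd x d))" unfolding a_def h_def by (simp add: sum_distrib_left)
  then have "2 * (real m / 2^K) = 2/3" using a mK by simp
  then have r: "real m / 2^K = 1/3" by linarith
  have "real m = (real m / 2^K) * 2^K" by simp
  also have "\<dots> = 2^K / 3" using r by simp
  finally have "3 * real m = 2^K" by simp
  then have "real (3 * m) = real ((2::nat)^K)" by simp
  then have e: "3 * m = (2::nat)^K" by (simp only: of_nat_eq_iff)
  have "(3::nat) dvd 2^K" unfolding e[symmetric] by simp
  then show False using not3[of K] by simp
qed

end


context main begin

lemma deg2split:
  assumes yV: "c \<in> V" and yD: "c \<notin> D" and Es: "E c s" and Ey': "E c c'" and ne: "s \<noteq> c'"
    and nb: "\<And>p. E c p \<Longrightarrow> p = s \<or> p = c'"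
  shows "\<exists>P R. P \<ge> 0 \<and> R \<ge> 0 \<and> wt c = P + R/2 \<and> wt s = P/2 + R \<and> wt c' = 2*P + R/4
          \<and> (\<forall>t. E s t \<longrightarrow> t \<noteq> c \<longrightarrow> wt t \<le> P/4 + 2*R)"
proof -
  define D1 where "D1 = {d\<in>D. dd c d = dd c' d + 1}"
  define D2 where "D2 = {d\<in>D. \<not> dd c d = dd c' d + 1}"
  define P where "P = (\<Sum>d\<in>D1. h (dd c d))"
  define R where "R = (\<Sum>d\<in>D2. h (dd s d))"
  have dV: "\<And>d. d \<in> D \<Longrightarrow> d \<in> V" using DV by blast
  have dy: "\<And>d. d \<in> D \<Longrightarrow> d \<noteq> c" using yD by auto
  have F1: "\<And>d. d \<in> D1 \<Longrightarrow> dd s d = dd c d + 1"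
  proof -
    fix d assume d: "d \<in> D1"
    then have dD: "d \<in> D" and q: "dd c d = dd c' d + 1" by (auto simp: D1_def)
    have "dd c d = dd s d + 1 \<or> dd s d = dd c d + 1" using dd_dir[OF Es dV[OF dD]] .
    moreover have "\<not> dd c d = dd s d + 1"
    proof
      assume h1: "dd c d = dd s d + 1"
      have "s = c'" by (rule parent_uniq[OF Es Ey' dV[OF dD] h1 q])
      then show False using ne by simp
    qed
    ultimately show "dd s d = dd c d + 1" by blast
  qed
  have F2: "\<And>d. d \<in> D2 \<Longrightarrow> dd c d = dd s d + 1"
  proof -
    fix d assume d: "d \<in> D2"
    then have dD: "d \<in> D" and q: "\<not> dd c d = dd c' d + 1" by (auto simp: D2_def)
    obtain p where p: "E c p" "dd c d = dd p d + 1" using parent_ex[OF yV dV[OF dD]] dy[OF dD] by auto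
    have "p = s \<or> p = c'" using nb[OF p(1)] .
    moreover have "p \<noteq> c'"
    proof
      assume "p = c'" then have "dd c d = dd c' d + 1" using p(2) by simp
      then show False using q by simp
    qed
    ultimately have "p = s" by blast
    then show "dd c d = dd s d + 1" using p(2) by simp
  qed
  have F3: "\<And>d. d \<in> D2 \<Longrightarrow> dd c' d = dd c d + 1"
  proof -
    fix d assume d: "d \<in> D2"
    then have dD: "d \<in> D" and q: "\<not> dd c d = dd c' d + 1" by (auto simp: D2_def)
    show "dd c' d = dd c d + 1" using dd_dir[OF Ey' dV[OF dD]] q by simp
  qed
  have F1': "\<And>d. d \<in> D1 \<Longrightarrow> dd c d = dd c' d + 1" by (simp add: D1_def)
  have sy: "\<And>u. wt u = (\<Sum>d\<in>D1. h (dd u d)) + (\<Sum>d\<in>D2. h (dd u d))"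
    unfolding D1_def D2_def by (rule wt_split)
  have P0: "P \<ge> 0" unfolding P_def by (rule sum_nonneg) (simp add: less_imp_le h_pos)
  have R0: "R \<ge> 0" unfolding R_def by (rule sum_nonneg) (simp add: less_imp_le h_pos)
  have a1: "(\<Sum>d\<in>D2. h (dd c d)) = R / 2" unfolding R_def by (rule sum_half) (rule F2)
  have a2: "(\<Sum>d\<in>D1. h (dd s d)) = P / 2" unfolding P_def by (rule sum_half) (rule F1)
  have a3: "(\<Sum>d\<in>D1. h (dd c d)) = (\<Sum>d\<in>D1. h (dd c' d)) / 2" by (rule sum_half) (rule F1')
  have a4: "(\<Sum>d\<in>D2. h (dd c' d)) = (\<Sum>d\<in>D2. h (dd c d)) / 2" by (rule sum_half) (rule F3)
  have wy: "wt c = P + R/2" using sy[of c] a1 unfolding P_def by simp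
  have ws: "wt s = P/2 + R" using sy[of s] a2 unfolding R_def by simp
  have wy': "wt c' = 2*P + R/4" using sy[of c'] a3 a4 a1 unfolding P_def by simp
  have wt_t: "\<forall>t. E s t \<longrightarrow> t \<noteq> c \<longrightarrow> wt t \<le> P/4 + 2*R"
  proof (intro allI impI)
    fix t assume Est: "E s t" and ty: "t \<noteq> c"
    have Esy: "E s c" using Esym[OF Es] .
    have F4: "\<And>d. d \<in> D1 \<Longrightarrow> dd t d = dd s d + 1"
    proof -
      fix d assume d: "d \<in> D1"
      then have dD: "d \<in> D" by (simp add: D1_def)
      have "dd s d = dd t d + 1 \<or> dd t d = dd s d + 1" using dd_dir[OF Est dV[OF dD]] .
      moreover have "\<not> dd s d = dd t d + 1"
      proof
        assume h1: "dd s d = dd t d + 1"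
        have "c = t" by (rule parent_uniq[OF Esy Est dV[OF dD] F1[OF d] h1])
        then show False using ty by simp
      qed
      ultimately show "dd t d = dd s d + 1" by blast
    qed
    have b1: "(\<Sum>d\<in>D1. h (dd t d)) = (\<Sum>d\<in>D1. h (dd s d)) / 2" by (rule sum_half) (rule F4)
    have b2: "(\<Sum>d\<in>D2. h (dd t d)) \<le> (\<Sum>d\<in>D2. 2 * h (dd s d))"
    proof (rule sum_mono)
      fix d assume "d \<in> D2"
      then have dD: "d \<in> D" by (simp add: D2_def)
      show "h (dd t d) \<le> 2 * h (dd s d)" by (rule h_le) (rule dd_step[OF Est dV[OF dD]])
    qed
    have "(\<Sum>d\<in>D2. 2 * h (dd s d)) = 2 * R" unfolding R_def by (simp add: sum_distrib_left)
    then show "wt t \<le> P/4 + 2*R" using sy[of t] b1 b2 a2 by simp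
  qed
  show ?thesis
    apply (rule exI[of _ P])
    apply (rule exI[of _ R])
    using P0 R0 wy ws wy' wt_t by simp
qed

lemma leafwt: assumes "degree V E x = 1" "E x v" shows "wt v = 2 * wt x"
proof -
  have xV: "x \<in> V" using EV assms(2) by blast
  have xD: "x \<notin> D" using notD assms(1) by simp
  have "wt x = wt v / 2" unfolding wt_h
  proof (rule sum_half)
    fix d assume "d \<in> D"
    then show "dd x d = dd v d + 1" using leaf[OF assms] DV xD by auto
  qed
  then show ?thesis by simp
qed

end



lemma enat_eq_num: "gdist E u w = enat n \<Longrightarrow> gdist E u w = numeral k \<Longrightarrow> n = numeral k"
  by (simp add: numeral_eq_enat)

context main begin

lemma p4: assumes u: "u \<in> deg_set V E 1" and w: "w \<in> deg_set V E 2" and g: "gdist E u w = 2" shows False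
proof -
  have uV: "u \<in> V" and du: "degree V E u = 1" using u by (auto simp: deg_set_def)
  have wV: "w \<in> V" and dw: "degree V E w = 2" using w by (auto simp: deg_set_def)
  have "dd u w = 2" using enat_eq_num[OF gdist_dd[OF uV wV] g] .
  then obtain v where uv: "E u v" and vw: "E v w" using dd2_mid[OF uV wV] by blast
  have wu: "wt u = 1" using slack[OF uV] du by simp
  have wv: "wt v = 2" using leafwt[OF du uv] wu by simp
  have wv': "E w v" using Esym[OF vw] .
  obtain w' where w': "E w w'" "w' \<noteq> v" "\<forall>p. E w p \<longrightarrow> p = v \<or> p = w'" using deg2_nbr[OF dw wv'] by blast
  have wD: "w \<notin> D" using notD dw by simp
  obtain P R where PR: "P \<ge> 0" "R \<ge> 0" "wt w = P + R/2" "wt v = P/2 + R" "wt w' = 2*P + R/4"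
    using deg2split[OF wV wD wv' w'(1) w'(2)[symmetric]] w'(3) by blast
  have "wt w = 1" using slack[OF wV] dw by simp
  moreover have "wt w' \<ge> 1" using wt_ge EV[OF w'(1)] by blast
  ultimately show False using PR wv by linarith
qed

lemma p5: assumes u1: "u1 \<in> deg_set V E 1" and u2: "u2 \<in> deg_set V E 1" and w: "w \<in> deg_set V E 2"
  and g12: "gdist E u1 u2 = 2" and g: "gdist E u1 w = 3 \<or> gdist E u1 w = 4" shows False
proof -
  have u1V: "u1 \<in> V" and du1: "degree V E u1 = 1" using u1 by (auto simp: deg_set_def)
  have u2V: "u2 \<in> V" and du2: "degree V E u2 = 1" using u2 by (auto simp: deg_set_def)
  have wV: "w \<in> V" and dw: "degree V E w = 2" using w by (auto simp: deg_set_def)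
  have "dd u1 u2 = 2" using enat_eq_num[OF gdist_dd[OF u1V u2V] g12] .
  then obtain v where uv: "E u1 v" and vu2: "E v u2" using dd2_mid[OF u1V u2V] by blast
  have ne12: "u1 \<noteq> u2" using \<open>dd u1 u2 = 2\<close> dd_self[of u1] by auto
  have dd1w: "dd u1 w = 3 \<or> dd u1 w = 4"
  proof (cases "gdist E u1 w = 3")
    case True then show ?thesis using enat_eq_num[OF gdist_dd[OF u1V wV] True] by simp
  next
    case False then have "gdist E u1 w = 4" using g by simp
    then show ?thesis using enat_eq_num[OF gdist_dd[OF u1V wV]] by simp
  qed
  have vV: "v \<in> V" using EV[OF uv] by blast
  have wu: "wt u1 = 1" using slack[OF u1V] du1 by simp
  have wv: "wt v = 2" using leafwt[OF du1 uv] wu by simp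
  have dv: "degree V E v = 3" using nb3[OF u1V _ uv] du1 by simp
  have vD: "v \<notin> D" using nbD[OF u1V _ uv] du1 by simp
  have u1D: "u1 \<notin> D" using notD du1 by simp
  have u2D: "u2 \<notin> D" using notD du2 by simp
  have u2v: "E u2 v" using Esym[OF vu2] .
  obtain z where z: "E v z" "z \<noteq> u1" "z \<noteq> u2" "\<forall>p. E v p \<longrightarrow> p = u1 \<or> p = u2 \<or> p = z"
    using deg3_nbr[OF dv Esym[OF uv] vu2 ne12] by blast
  have toz: "\<And>d. d \<in> V \<Longrightarrow> d \<noteq> v \<Longrightarrow> d \<noteq> u1 \<Longrightarrow> d \<noteq> u2 \<Longrightarrow> dd v d = dd z d + 1"
  proof -
    fix d assume d: "d \<in> V" "d \<noteq> v" "d \<noteq> u1" "d \<noteq> u2"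
    obtain p where p: "E v p" "dd v d = dd p d + 1" using parent_ex[OF vV d(1)] d(2) by auto
    have l1: "dd u1 d = dd v d + 1" using leaf[OF du1 uv d(1) d(3)] .
    have l2: "dd u2 d = dd v d + 1" using leaf[OF du2 u2v d(1) d(4)] .
    have "p \<noteq> u1"
    proof
      assume "p = u1" then have "dd v d = dd u1 d + 1" using p(2) by simp
      then show False using l1 by simp
    qed
    moreover have "p \<noteq> u2"
    proof
      assume "p = u2" then have "dd v d = dd u2 d + 1" using p(2) by simp
      then show False using l2 by simp
    qed
    ultimately have "p = z" using z(4) p(1) by blast
    then show "dd v d = dd z d + 1" using p(2) by simp
  qed
  have "wt v = wt z / 2" unfolding wt_h
  proof (rule sum_half)
    fix d assume dD: "d \<in> D"
    have "d \<in> V" using dD DV by blast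
    moreover have "d \<noteq> v" "d \<noteq> u1" "d \<noteq> u2" using dD vD u1D u2D by auto
    ultimately show "dd v d = dd z d + 1" by (rule toz)
  qed
  then have wz: "wt z = 4" using wv by simp
  have wne: "w \<noteq> v" "w \<noteq> u1" "w \<noteq> u2" using dw dv du1 du2 by auto
  have "dd u1 w = dd v w + 1" using leaf[OF du1 uv wV wne(2)] .
  moreover have "dd v w = dd z w + 1" by (rule toz[OF wV wne])
  ultimately have dzw: "dd z w = 1 \<or> dd z w = 2" using dd1w by linarith
  have zV: "z \<in> V" using EV[OF z(1)] by blast
  have wD: "w \<notin> D" using notD dw by simp
  have ww: "wt w = 1" using slack[OF wV] dw by simp
  show False
  proof (cases "dd z w = 1")
    case True
    then obtain q where q: "E z q" "dd q w = 0" using dd_walk_len[OF zV wV] by auto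
    have "q = w" using dd_0[OF _ wV q(2)] EV[OF q(1)] by blast
    then have wz': "E w z" using Esym[OF q(1)] by simp
    obtain w' where w': "E w w'" "w' \<noteq> z" "\<forall>p. E w p \<longrightarrow> p = z \<or> p = w'" using deg2_nbr[OF dw wz'] by blast
    obtain P R where PR: "P \<ge> 0" "R \<ge> 0" "wt w = P + R/2" "wt z = P/2 + R"
      using deg2split[OF wV wD wz' w'(1) w'(2)[symmetric]] w'(3) by blast
    show False using PR ww wz by linarith
  next
    case False
    then have "dd z w = 2" using dzw by simp
    then obtain s where zs: "E z s" and sw: "E s w" using dd2_mid[OF zV wV] by blast
    have ws: "E w s" using Esym[OF sw] .
    obtain w' where w': "E w w'" "w' \<noteq> s" "\<forall>p. E w p \<longrightarrow> p = s \<or> p = w'" using deg2_nbr[OF dw ws] by blast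
    obtain P R where PR: "P \<ge> 0" "R \<ge> 0" "wt w = P + R/2" "wt w' = 2*P + R/4"
        "\<forall>t. E s t \<longrightarrow> t \<noteq> w \<longrightarrow> wt t \<le> P/4 + 2*R"
      using deg2split[OF wV wD ws w'(1) w'(2)[symmetric]] w'(3) by blast
    have "z \<noteq> w" using \<open>dd z w = 2\<close> dd_self[of z] by auto
    then have "wt z \<le> P/4 + 2*R" using PR(5) Esym[OF zs] by blast
    moreover have "wt w' \<ge> 1" using wt_ge EV[OF w'(1)] by blast
    ultimately show False using PR ww wz by linarith
  qed
qed

end
theorem theorem3:
  fixes V :: "'a set" and E :: "'a \<Rightarrow> 'a \<Rightarrow> bool" and D :: "'a set"
  assumes "tree V E" and "subcubic V E"
    and "real (gamma_e V E) = gamma_ef V E" and "gamma_ef V E > 1"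
    and "min_porous_exp_dom V E D"
  shows "(\<forall>u \<in> deg_set V E 1 \<union> deg_set V E 2. weight E D u = 1)
    \<and> D \<subseteq> deg_set V E 3
    \<and> nbhd V E (deg_set V E 1 \<union> deg_set V E 2) \<subseteq> deg_set V E 3 - D
    \<and> \<not> (\<exists>u \<in> deg_set V E 1. \<exists>w \<in> deg_set V E 2. gdist E u w = 2)
    \<and> \<not> (\<exists>u1 \<in> deg_set V E 1. \<exists>u2 \<in> deg_set V E 1. \<exists>v \<in> deg_set V E 2.
          gdist E u1 u2 = 2 \<and> (gdist E u1 v = 3 \<or> gdist E u1 v = 4))"
proof -
  interpret main V E D
    by (rule main.intro, rule tr.intro, rule assms(1), rule main_axioms.intro) (rule assms)+
  have P1: "\<forall>u \<in> deg_set V E 1 \<union> deg_set V E 2. weight E D u = 1"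
  proof
    fix u assume "u \<in> deg_set V E 1 \<union> deg_set V E 2"
    then have uV: "u \<in> V" and "degree V E u < 3" by (auto simp: deg_set_def)
    then show "weight E D u = 1" using slack weight_wt by simp
  qed
  have P2: "D \<subseteq> deg_set V E 3"
  proof
    fix d assume "d \<in> D"
    then show "d \<in> deg_set V E 3" using DV Dsub by (auto simp: deg_set_def)
  qed
  have P3: "nbhd V E (deg_set V E 1 \<union> deg_set V E 2) \<subseteq> deg_set V E 3 - D"
  proof
    fix v assume "v \<in> nbhd V E (deg_set V E 1 \<union> deg_set V E 2)"
    then obtain x where v: "v \<in> V" and x: "x \<in> deg_set V E 1 \<union> deg_set V E 2" and xv: "E x v"
      by (auto simp: nbhd_def)
    have xV: "x \<in> V" and dx: "degree V E x < 3" using x by (auto simp: deg_set_def)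
    show "v \<in> deg_set V E 3 - D" using nb3[OF xV dx xv] nbD[OF xV dx xv] v by (simp add: deg_set_def)
  qed
  have P4: "\<not> (\<exists>u \<in> deg_set V E 1. \<exists>w \<in> deg_set V E 2. gdist E u w = 2)"
    using p4 by blast
  have P5: "\<not> (\<exists>u1 \<in> deg_set V E 1. \<exists>u2 \<in> deg_set V E 1. \<exists>v \<in> deg_set V E 2.
          gdist E u1 u2 = 2 \<and> (gdist E u1 v = 3 \<or> gdist E u1 v = 4))"
    using p5 by blast
  show ?thesis using P1 P2 P3 P4 P5 by blast
qed



end
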